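(* Let $G$ be a multigraph with $V(G)=S\cup\mathcal{T}$, $S\cap\mathcal{T}=\emptyset$, where every terminal in $\mathcal{T}$ has degree exactly one and is adjacent to a vertex of $S$, $G[S]$ is connected, and $k=|\partial(S)|=|\mathcal{T}|\ge 3$. Then $S$ can be partitioned into at most $k-2$ sets, each of which is connectivity-$2$ linked in $G$.
   Context: For disjoint vertex sets $A,B$, $E_G(A,B)$ is the set of edges with one endpoint in $A$ and the other in $B$; for $Y\subseteq V(G)$, $\partial(Y)=E_G(Y,V(G)\setminus Y)$. A set $X\subseteq S$ is connectivity-$c$ linked in $G$ if for every pair of disjoint sets $A,B$ with $A\cup B=X$ we have $|E_G(A,B)|\ge \min\big(|\partial(A)\cap\partial(X)|,\ |\partial(B)\cap\partial(X)|,\ c\big)$. *)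

theory Defs
  imports Main "HOL-Library.Disjoint_Sets"
begin

text \<open>A finite multigraph: vertex set V, edge set E (edge identities of type 'e),
  and an endpoint map ends giving each edge an (unordered, represented as a pair) pair
  of endpoints. Parallel edges are distinct elements of E; loops (fst = snd) are allowed.\<close>

definition multigraph :: "'a set \<Rightarrow> 'e set \<Rightarrow> ('e \<Rightarrow> 'a \<times> 'a) \<Rightarrow> bool" where
  "multigraph V E ends \<longleftrightarrow> finite V \<and> finite E \<and> (\<forall>e\<in>E. fst (ends e) \<in> V \<and> snd (ends e) \<in> V)"

definition edges_between :: "'e set \<Rightarrow> ('e \<Rightarrow> 'a \<times> 'a) \<Rightarrow> 'a set \<Rightarrow> 'a set \<Rightarrow> 'e set" where
  "edges_between E ends A B = {e\<in>E. (fst (ends e) \<in> A \<and> snd (ends e) \<in> B) \<or> (fst (ends e) \<in> B \<and> snd (ends e) \<in> A)}"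

definition bdry :: "'a set \<Rightarrow> 'e set \<Rightarrow> ('e \<Rightarrow> 'a \<times> 'a) \<Rightarrow> 'a set \<Rightarrow> 'e set" where
  "bdry V E ends Y = edges_between E ends Y (V - Y)"

text \<open>Degree: number of incident edge-ends (a loop counts twice).\<close>
definition degree :: "'e set \<Rightarrow> ('e \<Rightarrow> 'a \<times> 'a) \<Rightarrow> 'a \<Rightarrow> nat" where
  "degree E ends v = card {e\<in>E. fst (ends e) = v} + card {e\<in>E. snd (ends e) = v}"

definition adjacent :: "'e set \<Rightarrow> ('e \<Rightarrow> 'a \<times> 'a) \<Rightarrow> 'a \<Rightarrow> 'a \<Rightarrow> bool" where
  "adjacent E ends u v \<longleftrightarrow> (\<exists>e\<in>E. ends e = (u, v) \<or> ends e = (v, u))"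

definition induced_connected :: "'e set \<Rightarrow> ('e \<Rightarrow> 'a \<times> 'a) \<Rightarrow> 'a set \<Rightarrow> bool" where
  "induced_connected E ends S \<longleftrightarrow> S \<noteq> {} \<and>
     (\<forall>u\<in>S. \<forall>v\<in>S. (u, v) \<in> {(x, y). x \<in> S \<and> y \<in> S \<and> adjacent E ends x y}\<^sup>*)"

definition conn_linked :: "'a set \<Rightarrow> 'e set \<Rightarrow> ('e \<Rightarrow> 'a \<times> 'a) \<Rightarrow> nat \<Rightarrow> 'a set \<Rightarrow> bool" where
  "conn_linked V E ends c X \<longleftrightarrow>
     (\<forall>A B. A \<inter> B = {} \<and> A \<union> B = X \<longrightarrow>
        card (edges_between E ends A B) \<ge>
          min (card (bdry V E ends A \<inter> bdry V E ends X))
              (min (card (bdry V E ends B \<inter> bdry V E ends X)) c))"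

end

theory Submission
  imports Defs
begin

definition cutconn :: "'e set \<Rightarrow> ('e \<Rightarrow> 'a \<times> 'a) \<Rightarrow> 'a set \<Rightarrow> bool" where
  "cutconn E ends S \<longleftrightarrow> (\<forall>A B. A \<inter> B = {} \<and> A \<union> B = S \<and> A \<noteq> {} \<and> B \<noteq> {}
      \<longrightarrow> edges_between E ends A B \<noteq> {})"

lemma partition_union:
  assumes "partition_on A PA" "partition_on B PB" "A \<inter> B = {}"
  shows "partition_on (A \<union> B) (PA \<union> PB)"
proof (rule partition_onI)
  have u: "A = \<Union>PA" "B = \<Union>PB" using assms(1,2) partition_onD1 by auto
  then show "\<Union>(PA \<union> PB) = A \<union> B" by auto
  show "{} \<notin> PA \<union> PB" using assms(1,2) partition_onD3 by auto
  fix p q assume pq: "p \<in> PA \<union> PB" "q \<in> PA \<union> PB" "p \<noteq> q"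
  have dA: "disjoint PA" "disjoint PB" using assms(1,2) partition_onD2 by auto
  show "disjnt p q"
  proof (cases "p \<in> PA")
    case True
    show ?thesis
    proof (cases "q \<in> PA")
      case True2: True
      then show ?thesis using True dA(1) pq(3) unfolding pairwise_def by auto
    next
      case False
      then have "q \<in> PB" using pq by auto
      then show ?thesis using True u assms(3) unfolding disjnt_def by auto
    qed
  next
    case False
    then have p: "p \<in> PB" using pq by auto
    show ?thesis
    proof (cases "q \<in> PB")
      case True2: True
      then show ?thesis using p dA(2) pq(3) unfolding pairwise_def by auto
    next
      case False
      then have "q \<in> PA" using pq by auto
      then show ?thesis using p u assms(3) unfolding disjnt_def by auto
    qed
  qed
qed

lemma conn_cutconn:
  assumes "induced_connected E ends S"
  shows "cutconn E ends S"
  unfolding cutconn_def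
proof (intro allI impI)
  fix A B assume h: "A \<inter> B = {} \<and> A \<union> B = S \<and> A \<noteq> {} \<and> B \<noteq> {}"
  then obtain u v where uv: "u \<in> A" "v \<in> B" by blast
  let ?R = "{(x, y). x \<in> S \<and> y \<in> S \<and> adjacent E ends x y}"
  have "(u, v) \<in> ?R\<^sup>*" using assms uv h unfolding induced_connected_def by blast
  have step: "\<And>a b. (a, b) \<in> ?R\<^sup>* \<Longrightarrow> a \<in> A \<Longrightarrow> b \<notin> A \<Longrightarrow> \<exists>x y. (x, y) \<in> ?R \<and> x \<in> A \<and> y \<notin> A"
  proof -
    fix a b assume "(a, b) \<in> ?R\<^sup>*" "a \<in> A" "b \<notin> A"
    then show "\<exists>x y. (x, y) \<in> ?R \<and> x \<in> A \<and> y \<notin> A"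
      by (induction rule: rtrancl_induct) blast+
  qed
  obtain x y where xy: "(x, y) \<in> ?R" "x \<in> A" "y \<notin> A"
    using step[OF \<open>(u, v) \<in> ?R\<^sup>*\<close> uv(1)] uv h by blast
  then have "y \<in> B" using h by blast
  then show "edges_between E ends A B \<noteq> {}"
    using xy unfolding adjacent_def edges_between_def by force
qed

lemma cutconnD: "cutconn E ends S \<Longrightarrow> A \<inter> B = {} \<Longrightarrow> A \<union> B = S \<Longrightarrow> A \<noteq> {} \<Longrightarrow> B \<noteq> {}
   \<Longrightarrow> edges_between E ends A B \<noteq> {}"
  unfolding cutconn_def by blast

lemma eb_Un: "edges_between E ends X (Y \<union> Z) = edges_between E ends X Y \<union> edges_between E ends X Z"
  unfolding edges_between_def by auto

lemma eb_mono: "X \<subseteq> X' \<Longrightarrow> Y \<subseteq> Y' \<Longrightarrow> edges_between E ends X Y \<subseteq> edges_between E ends X' Y'"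
  unfolding edges_between_def by auto

lemma eb_sym: "edges_between E ends X Y = edges_between E ends Y X"
  unfolding edges_between_def by auto

lemma eb_three: "e \<in> edges_between E ends A1 B \<Longrightarrow> e \<in> edges_between E ends A2 B \<Longrightarrow>
   A1 \<inter> A2 = {} \<Longrightarrow> A1 \<inter> B = {} \<Longrightarrow> A2 \<inter> B = {} \<Longrightarrow> False"
  unfolding edges_between_def by auto

lemma gen:
  assumes "finite E" "finite S" "S \<subseteq> V" "cutconn E ends S" "card (bdry V E ends S) \<ge> 3"
  shows "\<exists>P. partition_on S P \<and> card P \<le> card (bdry V E ends S) - 2 \<and> (\<forall>X\<in>P. conn_linked V E ends 2 X)"
  using assms
proof (induction "card S" arbitrary: S rule: less_induct)
  case less
  show ?case
  proof (cases "conn_linked V E ends 2 S")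
    case True
    have "S \<noteq> {}" using less.prems(5) unfolding bdry_def edges_between_def by auto
    then show ?thesis using True less.prems(5)
      by (intro exI[of _ "{S}"]) (auto simp: partition_on_space)
  next
    case False
    then obtain A B where AB: "A \<inter> B = {}" "A \<union> B = S"
      and lt: "card (edges_between E ends A B) < min (card (bdry V E ends A \<inter> bdry V E ends S))
              (min (card (bdry V E ends B \<inter> bdry V E ends S)) 2)"
      unfolding conn_linked_def by (auto simp: not_le)
    have fin: "\<And>X Y. finite (edges_between E ends X Y)" using less.prems(1)
      unfolding edges_between_def by auto
    have finb: "\<And>X. finite (bdry V E ends X)" using fin unfolding bdry_def by auto
    have "A \<noteq> {}" using lt unfolding bdry_def edges_between_def by auto
    moreover have "B \<noteq> {}" using lt unfolding bdry_def edges_between_def by auto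
    ultimately have ne: "edges_between E ends A B \<noteq> {}"
      using less.prems(4) AB unfolding cutconn_def by blast
    have c1: "card (edges_between E ends A B) = 1"
    proof -
      have "card (edges_between E ends A B) > 0" using ne fin[of A B] by (simp add: card_gt_0_iff)
      moreover have "card (edges_between E ends A B) < 2" using lt by simp
      ultimately show ?thesis by linarith
    qed
    then obtain e where e: "edges_between E ends A B = {e}" using card_1_singletonE by blast
    define a where "a = card (bdry V E ends A \<inter> bdry V E ends S)"
    define b where "b = card (bdry V E ends B \<inter> bdry V E ends S)"
    have a2: "a \<ge> 2" and b2: "b \<ge> 2" using lt c1 unfolding a_def b_def by auto
    have dA: "bdry V E ends A = edges_between E ends A B \<union> (bdry V E ends A \<inter> bdry V E ends S)"
      using AB less.prems(3) unfolding bdry_def edges_between_def by auto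
    have dB: "bdry V E ends B = edges_between E ends A B \<union> (bdry V E ends B \<inter> bdry V E ends S)"
      using AB less.prems(3) unfolding bdry_def edges_between_def by auto
    have dS: "bdry V E ends S = (bdry V E ends A \<inter> bdry V E ends S) \<union> (bdry V E ends B \<inter> bdry V E ends S)"
      using AB less.prems(3) unfolding bdry_def edges_between_def by auto
    have disjA: "edges_between E ends A B \<inter> (bdry V E ends A \<inter> bdry V E ends S) = {}"
      using AB unfolding bdry_def edges_between_def by auto
    have disjB: "edges_between E ends A B \<inter> (bdry V E ends B \<inter> bdry V E ends S) = {}"
      using AB unfolding bdry_def edges_between_def by auto
    have disjS: "(bdry V E ends A \<inter> bdry V E ends S) \<inter> (bdry V E ends B \<inter> bdry V E ends S) = {}"
      using AB unfolding bdry_def edges_between_def by auto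
    have cA: "card (bdry V E ends A) = 1 + a"
      unfolding a_def using c1 disjA finb fin by (subst dA, subst card_Un_disjoint) auto
    have cB: "card (bdry V E ends B) = 1 + b"
      unfolding b_def using c1 disjB finb fin by (subst dB, subst card_Un_disjoint) auto
    have cS: "card (bdry V E ends S) = a + b"
      unfolding a_def b_def using disjS finb by (subst dS, subst card_Un_disjoint) auto
    have ccA: "cutconn E ends A"
      unfolding cutconn_def
    proof (intro allI impI notI)
      fix A1 A2 assume h: "A1 \<inter> A2 = {} \<and> A1 \<union> A2 = A \<and> A1 \<noteq> {} \<and> A2 \<noteq> {}"
        and z: "edges_between E ends A1 A2 = {}"
      have "edges_between E ends A1 (A2 \<union> B) \<noteq> {}"
        by (rule cutconnD[OF less.prems(4)]) (use h AB \<open>B \<noteq> {}\<close> in auto)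
      then have n1: "edges_between E ends A1 B \<noteq> {}" using z by (simp add: eb_Un)
      have "edges_between E ends A1 B \<subseteq> {e}" using e eb_mono[of A1 A B B E ends] h by auto
      then have e1: "e \<in> edges_between E ends A1 B" using n1 by auto
      have "edges_between E ends A2 (A1 \<union> B) \<noteq> {}"
        by (rule cutconnD[OF less.prems(4)]) (use h AB \<open>B \<noteq> {}\<close> in auto)
      then have n2: "edges_between E ends A2 B \<noteq> {}" using z eb_sym[of E ends A1 A2] by (simp add: eb_Un)
      have "edges_between E ends A2 B \<subseteq> {e}" using e eb_mono[of A2 A B B E ends] h by auto
      then have e2: "e \<in> edges_between E ends A2 B" using n2 by auto
      show False by (rule eb_three[OF e1 e2]) (use h AB in auto)
    qed
    have eB: "edges_between E ends B A = {e}" using e eb_sym[of E ends B A] by simp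
    have ccB: "cutconn E ends B"
      unfolding cutconn_def
    proof (intro allI impI notI)
      fix A1 A2 assume h: "A1 \<inter> A2 = {} \<and> A1 \<union> A2 = B \<and> A1 \<noteq> {} \<and> A2 \<noteq> {}"
        and z: "edges_between E ends A1 A2 = {}"
      have "edges_between E ends A1 (A2 \<union> A) \<noteq> {}"
        by (rule cutconnD[OF less.prems(4)]) (use h AB \<open>A \<noteq> {}\<close> in auto)
      then have n1: "edges_between E ends A1 A \<noteq> {}" using z by (simp add: eb_Un)
      have "edges_between E ends A1 A \<subseteq> {e}" using eB eb_mono[of A1 B A A E ends] h by auto
      then have e1: "e \<in> edges_between E ends A1 A" using n1 by auto
      have "edges_between E ends A2 (A1 \<union> A) \<noteq> {}"
        by (rule cutconnD[OF less.prems(4)]) (use h AB \<open>A \<noteq> {}\<close> in auto)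
      then have n2: "edges_between E ends A2 A \<noteq> {}" using z eb_sym[of E ends A1 A2] by (simp add: eb_Un)
      have "edges_between E ends A2 A \<subseteq> {e}" using eB eb_mono[of A2 B A A E ends] h by auto
      then have e2: "e \<in> edges_between E ends A2 A" using n2 by auto
      show False by (rule eb_three[OF e1 e2]) (use h AB in auto)
    qed
    have ltA: "card A < card S" using AB \<open>B \<noteq> {}\<close> less.prems(2)
      by (intro psubset_card_mono) auto
    have ltB: "card B < card S" using AB \<open>A \<noteq> {}\<close> less.prems(2)
      by (intro psubset_card_mono) auto
    have fA: "finite A" "A \<subseteq> V" using AB less.prems(2,3) by auto
    have fB: "finite B" "B \<subseteq> V" using AB less.prems(2,3) by auto
    have c3A: "card (bdry V E ends A) \<ge> 3" using cA a2 by simp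
    have c3B: "card (bdry V E ends B) \<ge> 3" using cB b2 by simp
    obtain PA where PA: "partition_on A PA" "card PA \<le> card (bdry V E ends A) - 2"
      "\<forall>X\<in>PA. conn_linked V E ends 2 X"
      using less.hyps[OF ltA less.prems(1) fA ccA c3A] by blast
    obtain PB where PB: "partition_on B PB" "card PB \<le> card (bdry V E ends B) - 2"
      "\<forall>X\<in>PB. conn_linked V E ends 2 X"
      using less.hyps[OF ltB less.prems(1) fB ccB c3B] by blast
    have "card (PA \<union> PB) \<le> card PA + card PB" by (rule card_Un_le)
    then have cP: "card (PA \<union> PB) \<le> card (bdry V E ends S) - 2"
      using PA(2) PB(2) cA cB cS a2 b2 by linarith
    have pP: "partition_on S (PA \<union> PB)"
      using partition_union[OF PA(1) PB(1) AB(1)] AB(2) by simp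
    have lP: "\<forall>X\<in>PA \<union> PB. conn_linked V E ends 2 X" using PA(3) PB(3) by blast
    show ?thesis using cP pP lP by blast
  qed
qed

theorem mainTheorem3:
  fixes V :: "'a set" and E :: "'e set" and ends :: "'e \<Rightarrow> 'a \<times> 'a"
    and S T :: "'a set" and k :: nat
  assumes "multigraph V E ends"
    and "V = S \<union> T" and "S \<inter> T = {}"
    and "\<forall>t\<in>T. degree E ends t = 1 \<and> (\<exists>s\<in>S. adjacent E ends t s)"
    and "induced_connected E ends S"
    and "k = card (bdry V E ends S)" and "k = card T" and "k \<ge> 3"
  shows "\<exists>P. partition_on S P \<and> card P \<le> k - 2 \<and> (\<forall>X\<in>P. conn_linked V E ends 2 X)"
  using gen[of E S V ends] assms conn_cutconn[OF assms(5)] unfolding multigraph_def by auto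

end
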